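(* Generalized MES does not satisfy EJR-M: there exists an instance in which the allocation returned by Generalized MES violates EJR-M.
   Context: Model: There is a set of agents $N=\{1,\dots,n\}$. The resource $R$ consists of a cake $C=[0,c]$ for a real $c\ge 0$ and a set of indivisible goods $G=\{g_1,\dots,g_m\}$ for an integer $m\ge 0$, with $\max(c,m)>0$. A piece of cake is a union of finitely many disjoint closed subintervals of $C$; its length $\ell(\cdot)$ is the sum of the lengths of its intervals. A bundle $R'=(C',G')$ consists of a piece of cake $C'\subseteq C$ and a set $G'\subseteq G$; its size is $s(R')=\ell(C')+|G'|$. Each agent $i$ approves a bundle $R_i=(C_i,G_i)$, and her utility for a bundle $R'$ is $u_i(R')=\ell(C_i\cap C')+|G_i\cap G'|$. A parameter $\alpha\in(0,c+m]$ is given; an allocation is a bundle $A$ with $s(A)\le\alpha$. For a real $t>0$, $N^*\subseteq N$ is $t$-cohesive if $|N^*|\ge t n/\alpha$ and $s(\bigcap_{i\in N^*}R_i)\ge t$. EJR-M: an allocation $A$ satisfies EJR-M if for every real $t>0$ and every $t$-cohesive group $N^*$ for which there exists a bundle $R^*\subseteq R$ with $s(R^* )=t$ and $R^*\subseteq R_i$ for all $i\in N^*$, there is $j\in N^*$ with $u_j(A)\ge t$. Generalized MES (Method of Equal Shares): Step 1: set $R'=(C',G')=(\emptyset,\emptyset)$ and budgets $b_i=\alpha/n$ for all $i$; agents still present are "remaining". Step 2: divide the remaining cake into intervals $I_1,\dots,I_k$ such that each agent approves each interval entirely or not at all. For an interval $I_j=[x_0,x_1]$, $x\in(x_0,x_1]$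 and $\rho\ge 0$, $I_j$ is $(x,\rho)$-affordable if $\sum_{i\in N_{I_j}}\min(b_i,(x-x_0)\rho)=x-x_0$, where $N_{I_j}$ is the set of remaining agents approving $I_j$. A remaining good $g$ is $\rho$-affordable if $\sum_{i\in N_g}\min(b_i,\rho)=1$, where $N_g$ is the set of remaining agents approving $g$. Step 3: if no $\rho$-affordable good and no $(x,\rho)$-affordable piece of cake exists for any $\rho$, return $R'$. Otherwise take either an interval $I_j$ with the smallest $\rho$ together with the largest $x$ such that $I_j$ is $(x,\rho)$-affordable, or a good $g$ with the smallest $\rho$ such that $g$ is $\rho$-affordable, whichever has smaller $\rho$. In the first case deduct $\min(b_i,(x-x_0)\rho)$ from $b_i$ for each $i\in N_{I_j}$, remove $[x_0,x]$ from the remaining cake and add it to $C'$; in the second case deduct $\min(b_i,\rho)$ from $b_i$ for each $i\in N_g$, remove $g$ from the remaining goods and add it to $G'$. Remove all agents with zero budget and go to Step 2. *)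

theory Defs
  imports "HOL-Analysis.Analysis"
begin

definition piece_of_cake :: "real \<Rightarrow> real set \<Rightarrow> bool" where
  "piece_of_cake c S \<longleftrightarrow>
     (\<exists>I :: (real \<times> real) set. finite I \<and>
        (\<forall>(a,b)\<in>I. 0 \<le> a \<and> a \<le> b \<and> b \<le> c) \<and>
        (\<forall>p\<in>I. \<forall>q\<in>I. p \<noteq> q \<longrightarrow> {fst p..snd p} \<inter> {fst q..snd q} = {}) \<and>
        S = (\<Union>(a,b)\<in>I. {a..b}))"

definition len :: "real set \<Rightarrow> real" where
  "len S = measure lborel S"

definition is_bundle :: "real \<Rightarrow> nat \<Rightarrow> real set \<times> nat set \<Rightarrow> bool" where
  "is_bundle c m B \<longleftrightarrow> piece_of_cake c (fst B) \<and> snd B \<subseteq> {..<m}"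

definition bsize :: "real set \<times> nat set \<Rightarrow> real" where
  "bsize B = len (fst B) + real (card (snd B))"

definition utility :: "(nat \<Rightarrow> real set) \<Rightarrow> (nat \<Rightarrow> nat set) \<Rightarrow> nat \<Rightarrow> real set \<times> nat set \<Rightarrow> real" where
  "utility Ci Gi i B = len (Ci i \<inter> fst B) + real (card (Gi i \<inter> snd B))"

definition valid_instance ::
  "nat \<Rightarrow> real \<Rightarrow> nat \<Rightarrow> real \<Rightarrow> (nat \<Rightarrow> real set) \<Rightarrow> (nat \<Rightarrow> nat set) \<Rightarrow> bool" where
  "valid_instance n c m \<alpha> Ci Gi \<longleftrightarrow>
     n \<ge> 1 \<and> c \<ge> 0 \<and> max c (real m) > 0 \<and> 0 < \<alpha> \<and> \<alpha> \<le> c + real m \<and>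
     (\<forall>i<n. is_bundle c m (Ci i, Gi i))"

definition ejr_m ::
  "nat \<Rightarrow> real \<Rightarrow> nat \<Rightarrow> real \<Rightarrow> (nat \<Rightarrow> real set) \<Rightarrow> (nat \<Rightarrow> nat set) \<Rightarrow> real set \<times> nat set \<Rightarrow> bool" where
  "ejr_m n c m \<alpha> Ci Gi A \<longleftrightarrow>
     (\<forall>t::real. \<forall>Ns. t > 0 \<and> Ns \<subseteq> {..<n} \<and>
        real (card Ns) \<ge> t * real n / \<alpha> \<and>
        bsize (\<Inter>i\<in>Ns. Ci i, \<Inter>i\<in>Ns. Gi i) \<ge> t \<and>
        (\<exists>Rs. is_bundle c m Rs \<and> bsize Rs = t \<and> (\<forall>i\<in>Ns. fst Rs \<subseteq> Ci i \<and> snd Rs \<subseteq> Gi i))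
      \<longrightarrow> (\<exists>j\<in>Ns. utility Ci Gi j A \<ge> t))"

text \<open>Generalized Method of Equal Shares, as a nondeterministic transition system
  (nondeterminism: the division of the remaining cake into intervals and tie-breaking).\<close>

record mes_state =
  rcake :: "real set"
  rgoods :: "nat set"
  bud :: "nat \<Rightarrow> real"
  ragents :: "nat set"
  selC :: "real set"
  selG :: "nat set"

definition uniform_interval :: "(nat \<Rightarrow> real set) \<Rightarrow> mes_state \<Rightarrow> real \<Rightarrow> real \<Rightarrow> bool" where
  "uniform_interval Ci s x0 x1 \<longleftrightarrow> x0 < x1 \<and> {x0<..<x1} \<subseteq> rcake s \<and>
     (\<forall>i\<in>ragents s. {x0<..<x1} \<subseteq> Ci i \<or> {x0<..<x1} \<inter> Ci i = {})"

definition cake_approvers :: "(nat \<Rightarrow> real set) \<Rightarrow> mes_state \<Rightarrow> real \<Rightarrow> real \<Rightarrow> nat set" where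
  "cake_approvers Ci s x0 x1 = {i\<in>ragents s. {x0<..<x1} \<subseteq> Ci i}"

definition good_approvers :: "(nat \<Rightarrow> nat set) \<Rightarrow> mes_state \<Rightarrow> nat \<Rightarrow> nat set" where
  "good_approvers Gi s g = {i\<in>ragents s. g \<in> Gi i}"

definition cake_affordable :: "(nat \<Rightarrow> real set) \<Rightarrow> mes_state \<Rightarrow> real \<Rightarrow> real \<Rightarrow> real \<Rightarrow> bool" where
  "cake_affordable Ci s x0 x \<rho> \<longleftrightarrow> x0 < x \<and> \<rho> \<ge> 0 \<and>
     (\<Sum>i\<in>cake_approvers Ci s x0 x. min (bud s i) ((x - x0) * \<rho>)) = x - x0"

definition good_affordable :: "(nat \<Rightarrow> nat set) \<Rightarrow> mes_state \<Rightarrow> nat \<Rightarrow> real \<Rightarrow> bool" where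
  "good_affordable Gi s g \<rho> \<longleftrightarrow> g \<in> rgoods s \<and> \<rho> \<ge> 0 \<and>
     (\<Sum>i\<in>good_approvers Gi s g. min (bud s i) \<rho>) = 1"

definition rho_minimal :: "(nat \<Rightarrow> real set) \<Rightarrow> (nat \<Rightarrow> nat set) \<Rightarrow> mes_state \<Rightarrow> real \<Rightarrow> bool" where
  "rho_minimal Ci Gi s \<rho> \<longleftrightarrow>
     (\<forall>x0 x \<rho>'. uniform_interval Ci s x0 x \<and> cake_affordable Ci s x0 x \<rho>' \<longrightarrow> \<rho> \<le> \<rho>') \<and>
     (\<forall>g \<rho>'. good_affordable Gi s g \<rho>' \<longrightarrow> \<rho> \<le> \<rho>')"

definition mes_terminal :: "(nat \<Rightarrow> real set) \<Rightarrow> (nat \<Rightarrow> nat set) \<Rightarrow> mes_state \<Rightarrow> bool" where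
  "mes_terminal Ci Gi s \<longleftrightarrow>
     \<not> (\<exists>x0 x \<rho>. uniform_interval Ci s x0 x \<and> cake_affordable Ci s x0 x \<rho>) \<and>
     \<not> (\<exists>g \<rho>. good_affordable Gi s g \<rho>)"

inductive mes_step :: "(nat \<Rightarrow> real set) \<Rightarrow> (nat \<Rightarrow> nat set) \<Rightarrow> mes_state \<Rightarrow> mes_state \<Rightarrow> bool"
  for Ci Gi where
  cake_step:
  "\<lbrakk> uniform_interval Ci s x0 x1; x0 < x; x \<le> x1; cake_affordable Ci s x0 x \<rho>;
     rho_minimal Ci Gi s \<rho>;
     \<forall>x'. x0 < x' \<and> x' \<le> x1 \<and> cake_affordable Ci s x0 x' \<rho> \<longrightarrow> x' \<le> x;
     b' = (\<lambda>i. if i \<in> cake_approvers Ci s x0 x1 then bud s i - min (bud s i) ((x - x0) * \<rho>)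
              else bud s i) \<rbrakk>
   \<Longrightarrow> mes_step Ci Gi s
        \<lparr> rcake = rcake s - {x0..x}, rgoods = rgoods s, bud = b',
          ragents = {i \<in> ragents s. b' i \<noteq> 0},
          selC = selC s \<union> {x0..x}, selG = selG s \<rparr>"
| good_step:
  "\<lbrakk> good_affordable Gi s g \<rho>; rho_minimal Ci Gi s \<rho>;
     b' = (\<lambda>i. if i \<in> good_approvers Gi s g then bud s i - min (bud s i) \<rho> else bud s i) \<rbrakk>
   \<Longrightarrow> mes_step Ci Gi s
        \<lparr> rcake = rcake s, rgoods = rgoods s - {g}, bud = b',
          ragents = {i \<in> ragents s. b' i \<noteq> 0},
          selC = selC s, selG = selG s \<union> {g} \<rparr>"

definition mes_init :: "nat \<Rightarrow> real \<Rightarrow> nat \<Rightarrow> real \<Rightarrow> mes_state" where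
  "mes_init n c m \<alpha> = \<lparr> rcake = {0..c}, rgoods = {..<m}, bud = (\<lambda>_. \<alpha> / real n),
      ragents = {..<n}, selC = {}, selG = {} \<rparr>"

definition mes_output ::
  "nat \<Rightarrow> real \<Rightarrow> nat \<Rightarrow> real \<Rightarrow> (nat \<Rightarrow> real set) \<Rightarrow> (nat \<Rightarrow> nat set) \<Rightarrow> real set \<times> nat set \<Rightarrow> bool" where
  "mes_output n c m \<alpha> Ci Gi A \<longleftrightarrow>
     (\<exists>s. (mes_step Ci Gi)\<^sup>*\<^sup>* (mes_init n c m \<alpha>) s \<and> mes_terminal Ci Gi s \<and> A = (selC s, selG s))"

end

theory Submission
  imports Defs
begin

definition CiX :: "nat \<Rightarrow> real set" where "CiX i = {0..1}"
definition GiX :: "nat \<Rightarrow> nat set" where "GiX i = (if i \<le> 1 then {0} else {})"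

definition InvX :: "mes_state \<Rightarrow> bool" where
  "InvX s \<longleftrightarrow> (\<exists>K. closed K \<and> rcake s = {0..1} - K) \<and>
     (\<forall>i<3. bud s i = (1 + measure lborel (rcake s)) / 3) \<and>
     ragents s = {0,1,2} \<and> rgoods s = {0} \<and> selG s = {} \<and> selC s \<subseteq> {0..1}"

lemma ends_in:
  fixes x0 x1 :: real
  assumes "x0 < x1" "{x0<..<x1} \<subseteq> {0..1}"
  shows "0 \<le> x0 \<and> x1 \<le> 1"
proof (rule ccontr)
  assume "\<not> (0 \<le> x0 \<and> x1 \<le> 1)"
  then consider "x0 < 0" | "x1 > 1" by linarith
  then show False
  proof cases
    case 1
    define p where "p = (x0 + min x1 0) / 2"
    have "p \<in> {x0<..<x1}" using 1 assms(1) unfolding p_def by (auto simp: min_def)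
    moreover have "p < 0" using 1 assms(1) unfolding p_def by (auto simp: min_def)
    ultimately show False using assms(2) by auto
  next
    case 2
    define p where "p = (x1 + max x0 1) / 2"
    have "p \<in> {x0<..<x1}" using 2 assms(1) unfolding p_def by (auto simp: max_def)
    moreover have "p > 1" using 2 assms(1) unfolding p_def by (auto simp: max_def)
    ultimately show False using assms(2) by auto
  qed
qed

lemma Icc_fm: "{a..b::real} \<in> fmeasurable lborel"
  using fmeasurable_cbox[of a b] by simp

lemma rset_meas:
  assumes "closed K"
  shows "({0..1::real} - K) \<in> sets lborel" "({0..1::real} - K) \<in> fmeasurable lborel"
proof -
  show A: "({0..1::real} - K) \<in> sets lborel"
    using assms by (intro sets.Diff) (auto intro: borel_closed)
  have "emeasure lborel ({0..1::real} - K) \<le> emeasure lborel {0..1::real}"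
    by (rule emeasure_mono) auto
  then have "emeasure lborel ({0..1::real} - K) < \<infinity>" by (simp add: le_less_trans)
  then show "({0..1::real} - K) \<in> fmeasurable lborel" using A by (auto simp: fmeasurable_def)
qed

lemma meas_step:
  fixes x0 x :: real
  assumes "closed K" "x0 < x" "{x0<..<x} \<subseteq> {0..1} - K"
  shows "measure lborel ({0..1} - K - {x0..x}) = measure lborel ({0..1} - K) - (x - x0)"
proof -
  let ?R = "{0..1::real} - K"
  have R: "?R \<in> sets lborel" "?R \<in> fmeasurable lborel" using rset_meas[OF assms(1)] by auto
  have B: "?R \<inter> {x0..x} \<in> sets lborel" using R by auto
  have "measure lborel (?R - ?R \<inter> {x0..x}) = measure lborel ?R - measure lborel (?R \<inter> {x0..x})"
    by (rule measurable_measure_Diff) (use R B in auto)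
  moreover have "?R - ?R \<inter> {x0..x} = ?R - {x0..x}" by auto
  moreover have "measure lborel (?R \<inter> {x0..x}) = x - x0"
  proof (rule antisym)
    have "measure lborel (?R \<inter> {x0..x}) \<le> measure lborel {x0..x}"
      by (rule measure_mono_fmeasurable) (use B Icc_fm in auto)
    then show "measure lborel (?R \<inter> {x0..x}) \<le> x - x0" using assms(2) by simp
    have "measure lborel {x0<..<x} \<le> measure lborel (?R \<inter> {x0..x})"
      by (rule measure_mono_fmeasurable) (use B assms(3) fmeasurable_Int_fmeasurable[OF R(2) B] in auto)
    then show "x - x0 \<le> measure lborel (?R \<inter> {x0..x})" using assms(2) by simp
  qed
  ultimately show ?thesis by simp
qed

lemma fin01: "{0,1::real} \<in> fmeasurable lborel"
proof -
  have "{0,1::real} \<in> null_sets lborel" by (rule finite_imp_null_set_lborel) simp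
  then show ?thesis by (simp add: fmeasurable_def null_setsD1 null_setsD2)
qed

lemma open_piece:
  assumes "closed K" "measure lborel ({0..1::real} - K) > 0"
  shows "\<exists>a b. a < b \<and> b - a \<le> 1 \<and> {a<..<b} \<subseteq> {0..1} - K"
proof -
  have "{0<..<1::real} - K \<noteq> {}"
  proof
    assume e: "{0<..<1::real} - K = {}"
    have "{0..1::real} - K \<subseteq> {0,1}"
    proof
      fix x assume x: "x \<in> {0..1::real} - K"
      have "x \<notin> {0<..<1} - K" using e by auto
      then show "x \<in> {0,1}" using x by auto
    qed
    then have "measure lborel ({0..1::real} - K) \<le> measure lborel {0,1::real}"
      by (intro measure_mono_fmeasurable) (use rset_meas[OF assms(1)] fin01 in auto)
    moreover have "measure lborel {0,1::real} = 0"
      using finite_imp_null_set_lborel[of "{0,1::real}"] by (simp add: null_setsD1 measure_def)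
    ultimately show False using assms(2) by simp
  qed
  then obtain p where p: "p \<in> {0<..<1::real} - K" by blast
  have "open ({0<..<1::real} - K)" using assms(1) by (intro open_Diff) auto
  then obtain e where e: "e > 0" "ball p e \<subseteq> {0<..<1::real} - K"
    using p open_contains_ball by blast
  define e' where "e' = min e (1/2)"
  have "{p - e'<..<p + e'} \<subseteq> ball p e" unfolding ball_eq_greaterThanLessThan e'_def by auto
  then have "{p - e'<..<p + e'} \<subseteq> {0..1} - K" using e by auto
  moreover have "p - e' < p + e'" "(p + e') - (p - e') \<le> 1" using e unfolding e'_def by auto
  ultimately show ?thesis by blast
qed

lemma cake_appr:
  assumes "InvX s" "x0 < x" "{x0<..<x} \<subseteq> rcake s"
  shows "cake_approvers CiX s x0 x = {0,1,2}"
proof -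
  have "rcake s \<subseteq> {0..1}" using assms(1) unfolding InvX_def by auto
  then show ?thesis using assms unfolding cake_approvers_def InvX_def CiX_def by auto
qed

lemma sum3: "(\<Sum>i\<in>{0,1,2::nat}. f i) = f 0 + f 1 + (f 2 :: real)" by simp

lemma inv_step:
  assumes "mes_step CiX GiX s s'" "InvX s"
  shows "InvX s'"
  using assms(1)
proof cases
  case (cake_step x0 x1 x \<rho> b')
  from assms(2) obtain K where K: "closed K" "rcake s = {0..1} - K" unfolding InvX_def by auto
  define \<beta> where "\<beta> = (1 + measure lborel (rcake s)) / 3"
  have bud: "\<forall>i<3. bud s i = \<beta>" using assms(2) unfolding InvX_def \<beta>_def by auto
  have ui: "x0 < x1" "{x0<..<x1} \<subseteq> rcake s" using cake_step(2) unfolding uniform_interval_def by auto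
  have sub: "{x0<..<x} \<subseteq> rcake s" using ui cake_step(4) by auto
  have ca1: "cake_approvers CiX s x0 x1 = {0,1,2}" by (rule cake_appr[OF assms(2) ui])
  have ca: "cake_approvers CiX s x0 x = {0,1,2}" by (rule cake_appr[OF assms(2) cake_step(3) sub])
  have eq: "3 * min \<beta> ((x - x0) * \<rho>) = x - x0"
    using cake_step(5) bud unfolding cake_affordable_def ca by (simp add: sum3)
  have rsub: "rcake s \<subseteq> {0..1}" using K by auto
  have e01: "0 \<le> x0 \<and> x \<le> 1" using ends_in[OF cake_step(3)] sub rsub by blast
  have m: "measure lborel (rcake s - {x0..x}) = measure lborel (rcake s) - (x - x0)"
    using meas_step[OF K(1) cake_step(3)] sub K(2) by simp
  have mpos: "measure lborel (rcake s - {x0..x}) \<ge> 0" by simp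
  have dm: "min \<beta> ((x - x0) * \<rho>) = (x - x0) / 3" using eq by simp
  have b'v: "\<forall>i<3. b' i = (1 + measure lborel (rcake s - {x0..x})) / 3"
  proof (intro allI impI)
    fix i :: nat assume i3: "i < 3"
    then have "i \<in> cake_approvers CiX s x0 x1" using ca1 by auto
    then have "b' i = \<beta> - (x - x0) / 3" using cake_step(8) bud dm i3 by simp
    then show "b' i = (1 + measure lborel (rcake s - {x0..x})) / 3" using m unfolding \<beta>_def
      by (simp add: field_simps)
  qed
  have posb: "b' i \<noteq> 0" if "i < 3" for i
  proof -
    have "b' i = (1 + measure lborel (rcake s - {x0..x})) / 3" using b'v that by blast
    then show ?thesis using mpos by (smt (verit) divide_eq_0_iff)
  qed
  have "ragents s = {0,1,2}" using assms(2) unfolding InvX_def by auto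
  moreover have "b' 0 \<noteq> 0" "b' 1 \<noteq> 0" "b' 2 \<noteq> 0" using posb by auto
  ultimately have rag: "{i \<in> ragents s. b' i \<noteq> 0} = {0,1,2}" by auto
  have inv: "rgoods s = {0}" "selG s = {}" "selC s \<subseteq> {0..1}" using assms(2) unfolding InvX_def by auto
  show ?thesis unfolding cake_step(1) InvX_def mes_state.simps
  proof (intro conjI)
    show "\<exists>K'. closed K' \<and> rcake s - {x0..x} = {0..1} - K'"
      by (rule exI[of _ "K \<union> {x0..x}"]) (use K in auto)
    show "\<forall>i<3. b' i = (1 + measure lborel (rcake s - {x0..x})) / 3" by (rule b'v)
    show "{i \<in> ragents s. b' i \<noteq> 0} = {0,1,2}" by (rule rag)
    show "rgoods s = {0}" "selG s = {}" by (rule inv(1), rule inv(2))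
    show "selC s \<union> {x0..x} \<subseteq> {0..1}" using inv(3) e01 by auto
  qed
next
  case (good_step g \<rho> b')
  from assms(2) obtain K where K: "closed K" "rcake s = {0..1} - K" unfolding InvX_def by auto
  define \<beta> where "\<beta> = (1 + measure lborel (rcake s)) / 3"
  have bud: "\<forall>i<3. bud s i = \<beta>" using assms(2) unfolding InvX_def \<beta>_def by auto
  have g0: "g = 0" using good_step(2) assms(2) unfolding good_affordable_def InvX_def by auto
  have ga: "good_approvers GiX s g = {0,1}" using assms(2) g0
    unfolding good_approvers_def InvX_def GiX_def by auto
  have eq: "2 * min \<beta> \<rho> = 1" using good_step(2) bud unfolding good_affordable_def ga by simp
  then have b2: "\<beta> \<ge> 1/2" "\<rho> \<ge> 1/2" by auto
  then have "measure lborel ({0..1} - K) > 0" using K unfolding \<beta>_def by simp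
  then obtain a b where ab: "a < b" "b - a \<le> 1" "{a<..<b} \<subseteq> rcake s"
    using open_piece[OF K(1)] K(2) by auto
  have "uniform_interval CiX s a b"
    using ab assms(2) K unfolding uniform_interval_def InvX_def CiX_def by auto
  moreover have "cake_affordable CiX s a b (1/3)"
    unfolding cake_affordable_def cake_appr[OF assms(2) ab(1) ab(3)] using bud ab b2
    by (simp add: sum3 min_def field_simps)
  ultimately have "\<rho> \<le> 1/3" using good_step(3) unfolding rho_minimal_def by blast
  then show ?thesis using b2 by simp
qed

lemma inv_reach:
  assumes "(mes_step CiX GiX)\<^sup>*\<^sup>* (mes_init 3 1 1 2) s"
  shows "InvX s"
  using assms
proof (induction rule: rtranclp_induct)
  case base
  show ?case unfolding InvX_def mes_init_def
    by (auto intro!: exI[of _ "{}"])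
next
  case (step y z)
  then show ?case using inv_step by blast
qed

lemma len_le1: "S \<subseteq> {0..1::real} \<Longrightarrow> len S \<le> 1"
proof -
  assume S: "S \<subseteq> {0..1::real}"
  show "len S \<le> 1"
  proof (cases "S \<in> sets lborel")
    case True
    then have "measure lborel S \<le> measure lborel {0..1::real}"
      by (intro measure_mono_fmeasurable) (use S Icc_fm in auto)
    then show ?thesis unfolding len_def by simp
  next
    case False
    then show ?thesis unfolding len_def by (simp add: measure_notin_sets)
  qed
qed

lemma lt3: "{..<3::nat} = {0,1,2}" by auto

lemma rho_min_inv:
  assumes "InvX s"
  shows "rho_minimal CiX GiX s (1/3)"
  unfolding rho_minimal_def
proof (intro conjI allI impI)
  define \<beta> where "\<beta> = (1 + measure lborel (rcake s)) / 3"
  have bud: "\<forall>i<3. bud s i = \<beta>" using assms unfolding InvX_def \<beta>_def by auto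
  fix x0 x \<rho>'
  assume h: "uniform_interval CiX s x0 x \<and> cake_affordable CiX s x0 x \<rho>'"
  then have ui: "x0 < x" "{x0<..<x} \<subseteq> rcake s" unfolding uniform_interval_def by auto
  have "3 * min \<beta> ((x - x0) * \<rho>') = x - x0"
    using h bud unfolding cake_affordable_def cake_appr[OF assms ui] by (simp add: sum3)
  moreover define q where "q = (x - x0) * \<rho>'"
  ultimately have "3 * min \<beta> q = x - x0" by simp
  then have "(x - x0) / 3 = min \<beta> q" by simp
  then have qge: "q \<ge> (x - x0) / 3" using min.cobounded2[of \<beta> q] by simp
  show "1/3 \<le> \<rho>'"
  proof (rule ccontr)
    assume "\<not> 1/3 \<le> \<rho>'"
    then have "\<rho>' < 1/3" by simp
    then have "(x - x0) * \<rho>' < (x - x0) * (1/3)" using ui(1) by (intro mult_strict_left_mono) auto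
    then show False using qge unfolding q_def by simp
  qed
next
  define \<beta> where "\<beta> = (1 + measure lborel (rcake s)) / 3"
  have bud: "\<forall>i<3. bud s i = \<beta>" using assms unfolding InvX_def \<beta>_def by auto
  fix g \<rho>'
  assume h: "good_affordable GiX s g \<rho>'"
  have g0: "g = 0" using h assms unfolding good_affordable_def InvX_def by auto
  have ga: "good_approvers GiX s g = {0,1}" using assms g0
    unfolding good_approvers_def InvX_def GiX_def by auto
  have "2 * min \<beta> \<rho>' = 1" using h bud unfolding good_affordable_def ga by simp
  then show "1/3 \<le> \<rho>'" using min.cobounded2[of \<beta> "\<rho>'"] by linarith
qed

lemma init_inv: "InvX (mes_init 3 1 1 2)"
  using inv_reach by blast

theorem mainTheorem6:
  shows "\<exists>n c m \<alpha> Ci Gi. valid_instance n c m \<alpha> Ci Gi \<and>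
           (\<exists>A. mes_output n c m \<alpha> Ci Gi A) \<and>
           (\<forall>A. mes_output n c m \<alpha> Ci Gi A \<longrightarrow> \<not> ejr_m n c m \<alpha> Ci Gi A)"
proof -
  have pc1: "piece_of_cake 1 {0..1}" unfolding piece_of_cake_def
    by (rule exI[of _ "{(0,1)}"]) auto
  have V: "valid_instance 3 1 1 2 CiX GiX"
    unfolding valid_instance_def is_bundle_def CiX_def GiX_def using pc1 by auto
  let ?s0 = "mes_init 3 1 1 2"
  define b' where "b' = (\<lambda>i. if i \<in> cake_approvers CiX ?s0 0 1 then bud ?s0 i - min (bud ?s0 i) ((1 - 0) * (1/3::real))
              else bud ?s0 i)"
  let ?s1 = "\<lparr> rcake = rcake ?s0 - {0..1}, rgoods = rgoods ?s0, bud = b',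
          ragents = {i \<in> ragents ?s0. b' i \<noteq> 0},
          selC = selC ?s0 \<union> {0..1}, selG = selG ?s0 \<rparr>"
  have ui: "uniform_interval CiX ?s0 0 1"
    unfolding uniform_interval_def mes_init_def CiX_def by auto
  have ca: "cake_approvers CiX ?s0 0 1 = {0,1,2}"
    unfolding cake_approvers_def mes_init_def CiX_def by auto
  have caff: "cake_affordable CiX ?s0 0 1 (1/3)"
    unfolding cake_affordable_def ca by (simp add: mes_init_def sum3)
  have st: "mes_step CiX GiX ?s0 ?s1"
    by (rule mes_step.cake_step[OF ui _ _ caff rho_min_inv[OF init_inv]]) (auto simp: b'_def)
  have b'v: "b' i = (if i < 3 then 1/3 else 2/3)" for i
    unfolding b'_def ca by (auto simp: mes_init_def)
  have rag1: "{i \<in> ragents ?s0. b' i \<noteq> 0} = {0,1,2}"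
    using b'v by (auto simp: mes_init_def)
  have term1: "mes_terminal CiX GiX ?s1"
    unfolding mes_terminal_def
  proof (intro conjI notI)
    assume "\<exists>x0 x \<rho>. uniform_interval CiX ?s1 x0 x \<and> cake_affordable CiX ?s1 x0 x \<rho>"
    then obtain x0 x where "x0 < x" "{x0<..<x} \<subseteq> rcake ?s1" unfolding uniform_interval_def by blast
    moreover have "rcake ?s1 = {}" by (simp add: mes_init_def)
    ultimately show False by (simp add: subset_eq) (meson dense greaterThanLessThan_iff)
  next
    assume "\<exists>g \<rho>. good_affordable GiX ?s1 g \<rho>"
    then obtain g \<rho> where h: "good_affordable GiX ?s1 g \<rho>" by blast
    have g0: "g = 0" using h unfolding good_affordable_def by (simp add: mes_init_def)
    have ga: "good_approvers GiX ?s1 g = {0,1}" using g0 rag1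
      unfolding good_approvers_def GiX_def by auto
    have "2 * min (1/3) \<rho> = (1::real)" using h b'v unfolding good_affordable_def ga by simp
    then show False by linarith
  qed
  have O: "\<exists>A. mes_output 3 1 1 2 CiX GiX A"
    unfolding mes_output_def using st term1 by blast
  have E: "\<forall>A. mes_output 3 1 1 2 CiX GiX A \<longrightarrow> \<not> ejr_m 3 1 1 2 CiX GiX A"
  proof (intro allI impI)
    fix A assume "mes_output 3 1 1 2 CiX GiX A"
    then obtain s where s: "(mes_step CiX GiX)\<^sup>*\<^sup>* ?s0 s" "A = (selC s, selG s)"
      unfolding mes_output_def by blast
    have I: "InvX s" using inv_reach[OF s(1)] .
    have util: "utility CiX GiX j A \<le> 1" for j
    proof -
      have "selG s = {}" "selC s \<subseteq> {0..1}" using I unfolding InvX_def by auto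
      then show ?thesis unfolding utility_def s(2) using len_le1[of "CiX j \<inter> selC s"] by auto
    qed
    have pc2: "piece_of_cake 1 {0..1/3}" unfolding piece_of_cake_def
      by (rule exI[of _ "{(0,1/3)}"]) auto
    have l1: "len {0..1::real} = 1" unfolding len_def by simp
    have l2: "len {0..1/3::real} = 1/3" unfolding len_def by simp
    have inter: "(\<Inter>i\<in>{0,1::nat}. CiX i) = {0..1}" "(\<Inter>i\<in>{0,1::nat}. GiX i) = {0}"
      unfolding CiX_def GiX_def by auto
    show "\<not> ejr_m 3 1 1 2 CiX GiX A"
      unfolding ejr_m_def
    proof
      assume H: "\<forall>t::real. \<forall>Ns. t > 0 \<and> Ns \<subseteq> {..<3} \<and>
        real (card Ns) \<ge> t * real 3 / 2 \<and>
        bsize (\<Inter>i\<in>Ns. CiX i, \<Inter>i\<in>Ns. GiX i) \<ge> t \<and>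
        (\<exists>Rs. is_bundle 1 1 Rs \<and> bsize Rs = t \<and> (\<forall>i\<in>Ns. fst Rs \<subseteq> CiX i \<and> snd Rs \<subseteq> GiX i))
        \<longrightarrow> (\<exists>j\<in>Ns. utility CiX GiX j A \<ge> t)"
      have "\<exists>Rs. is_bundle 1 1 Rs \<and> bsize Rs = 4/3 \<and> (\<forall>i\<in>{0,1::nat}. fst Rs \<subseteq> CiX i \<and> snd Rs \<subseteq> GiX i)"
        by (rule exI[of _ "({0..1/3}, {0})"]) (auto simp: is_bundle_def pc2 bsize_def l2 CiX_def GiX_def)
      moreover have "bsize (\<Inter>i\<in>{0,1::nat}. CiX i, \<Inter>i\<in>{0,1::nat}. GiX i) \<ge> 4/3"
        by (simp add: bsize_def CiX_def GiX_def l1)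
      ultimately have X: "(4/3::real) > 0 \<and> {0,1::nat} \<subseteq> {..<3} \<and>
        real (card {0,1::nat}) \<ge> 4/3 * real (3::nat) / 2 \<and>
        bsize (\<Inter>i\<in>{0,1::nat}. CiX i, \<Inter>i\<in>{0,1::nat}. GiX i) \<ge> 4/3 \<and>
        (\<exists>Rs. is_bundle 1 1 Rs \<and> bsize Rs = 4/3 \<and> (\<forall>i\<in>{0,1::nat}. fst Rs \<subseteq> CiX i \<and> snd Rs \<subseteq> GiX i))"
        by simp
      have "\<exists>j\<in>{0,1::nat}. utility CiX GiX j A \<ge> 4/3"
        by (rule mp[OF H[THEN spec[where x="4/3"], THEN spec[where x="{0,1::nat}"]] X])
      then obtain j where "utility CiX GiX j A \<ge> 4/3" by blast
      then show False using util[of j] by linarith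
    qed
  qed
  show ?thesis using V O E by blast
qed

end
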